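(* Let $d\ge 2$, $\alpha\in[0,1]$, and let $\rho_W$ be the Werner state on $\mathbb C^d\otimes\mathbb C^d$, \[ \rho_W=\alpha\binom{d+1}{2}^{-1}\Pi_+ + (1-\alpha)\binom{d}{2}^{-1}\Pi_-,\qquad \Pi_\pm=\tfrac12(\mathbb I\pm F), \] where $F=\sum_{i,j=1}^d|i\rangle\langle j|\otimes|j\rangle\langle i|$ is the swap operator. Let $p_n=\mathrm{Tr}[(\rho_W^{T_A})^n]$. Then $p_3<p_2^2$ if and only if $\alpha<1/2$, and this holds if and only if $\rho_W^{T_A}$ has a negative eigenvalue. (Consequently, since $\rho_W$ is separable for $\alpha\ge1/2$, the condition $p_3<p_2^2$ is necessary and sufficient for $\rho_W$ to be entangled.)
   Context: The partial transpose on the first factor $A$ is defined in the computational product basis by $(|k_A,k_B\rangle\langle l_A,l_B|)^{T_A}=|l_A,k_B\rangle\langle k_A,l_B|$. *)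

theory Defs
  imports Complex_Main "Jordan_Normal_Form.Char_Poly"
begin

text \<open>Operators on C^d (x) C^d are (d*d) x (d*d) complex matrices; the product basis
  vector |a,b> (a,b < d) has index a*d + b, i.e. the first factor A is index div d
  and the second factor B is index mod d.\<close>

definition swap_op :: "nat \<Rightarrow> complex mat" where
  "swap_op d = mat (d*d) (d*d)
     (\<lambda>(r,c). if r div d = c mod d \<and> r mod d = c div d then 1 else 0)"

definition Pi_plus :: "nat \<Rightarrow> complex mat" where
  "Pi_plus d = (1/2 :: complex) \<cdot>\<^sub>m (1\<^sub>m (d*d) + swap_op d)"

definition Pi_minus :: "nat \<Rightarrow> complex mat" where
  "Pi_minus d = (1/2 :: complex) \<cdot>\<^sub>m (1\<^sub>m (d*d) - swap_op d)"

definition werner :: "nat \<Rightarrow> real \<Rightarrow> complex mat" where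
  "werner d \<alpha> =
     (complex_of_real (\<alpha> / real (Suc d choose 2))) \<cdot>\<^sub>m Pi_plus d
   + (complex_of_real ((1 - \<alpha>) / real (d choose 2))) \<cdot>\<^sub>m Pi_minus d"

text \<open>Partial transpose on the first factor:
  (|kA,kB><lA,lB|)^{T_A} = |lA,kB><kA,lB|, i.e.
  M^{T_A}((x,y),(u,v)) = M((u,y),(x,v)).\<close>
definition partial_transpose_A :: "nat \<Rightarrow> complex mat \<Rightarrow> complex mat" where
  "partial_transpose_A d M = mat (d*d) (d*d)
     (\<lambda>(r,c). M $$ ((c div d) * d + r mod d, (r div d) * d + c mod d))"

definition mat_trace :: "complex mat \<Rightarrow> complex" where
  "mat_trace A = (\<Sum>i<dim_row A. A $$ (i,i))"

definition werner_moment :: "nat \<Rightarrow> real \<Rightarrow> nat \<Rightarrow> complex" where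
  "werner_moment d \<alpha> n = mat_trace ((partial_transpose_A d (werner d \<alpha>)) ^\<^sub>m n)"

end

theory Submission
  imports Defs
begin

definition G :: "nat \<Rightarrow> complex \<Rightarrow> complex \<Rightarrow> complex mat" where
  "G d a b = mat (d*d) (d*d) (\<lambda>(r,c). (if r = c then a else 0)
      + (if r div d = r mod d \<and> c div d = c mod d then b else 0))"

lemma card_diag: "card {k. k < d*d \<and> k div d = k mod d} = d"
proof -
  have "{k. k < d*d \<and> k div d = k mod d} = (\<lambda>i. i*d+i) ` {..<d}"
  proof (rule equalityI; rule subsetI)
    fix k assume "k \<in> {k. k < d*d \<and> k div d = k mod d}"
    hence k: "k < d*d" "k div d = k mod d" by auto
    hence "k = (k div d)*d + k div d" by (metis div_mult_mod_eq)
    moreover have "k div d < d" using k(1) by (metis less_mult_imp_div_less)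
    ultimately show "k \<in> (\<lambda>i. i*d+i) ` {..<d}" by blast
  next
    fix k assume "k \<in> (\<lambda>i. i*d+i) ` {..<d}"
    then obtain i where i: "i < d" "k = i*d+i" by auto
    have "i*d+i < Suc i * d" using i by simp
    also have "Suc i * d \<le> d*d" using i by (intro mult_le_mono1) simp
    finally have "i*d+i < d*d" .
    moreover have "k div d = i" "k mod d = i" using i by auto
    ultimately show "k \<in> {k. k < d*d \<and> k div d = k mod d}" using i by auto
  qed
  moreover have "inj_on (\<lambda>i. i*d+i) {..<d}"
    by (rule inj_on_inverseI[where g="\<lambda>k. k div d"]) simp
  ultimately show ?thesis by (simp add: card_image)
qed

lemma sum_diag: "(\<Sum>k<d*d. if k div d = k mod d then (x::complex) else 0) = of_nat d * x"
proof -
  have "(\<Sum>k<d*d. if k div d = k mod d then x else 0) = (\<Sum>k\<in>{k\<in>{..<d*d}. k div d = k mod d}. x)"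
    by (rule sum.inter_filter[symmetric]) simp
  also have "\<dots> = of_nat (card {k\<in>{..<d*d}. k div d = k mod d}) * x" by simp
  also have "{k\<in>{..<d*d}. k div d = k mod d} = {k. k < d*d \<and> k div d = k mod d}" by auto
  finally show ?thesis using card_diag[of d] by simp
qed

lemma G_entry:
  "G d a b * G d a' b' = G d (a*a') (a*b' + b*a' + b*b'*of_nat d)"
proof (rule eq_matI)
  fix r c assume rc: "r < dim_row (G d (a*a') (a*b' + b*a' + b*b'*of_nat d))"
     "c < dim_col (G d (a*a') (a*b' + b*a' + b*b'*of_nat d))"
  hence r: "r < d*d" and c: "c < d*d" by (auto simp: G_def)
  define D where "D = (\<lambda>k. k div d = k mod d)"
  define P where "P = (D r \<and> D c)"
  have "(G d a b * G d a' b') $$ (r,c) = (\<Sum>k<d*d. ((if r=k then a else 0) + (if D r \<and> D k then b else 0))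
        * ((if k=c then a' else 0) + (if D k \<and> D c then b' else 0)))"
    using r c by (simp add: G_def scalar_prod_def D_def atLeast0LessThan)
  also have "\<dots> = (\<Sum>k<d*d. (if r = c then (if k = r then a*a' else 0) else 0) + (if P then
      (if k = r then a*b' else 0) + (if k = c then b*a' else 0) + (if D k then b*b' else 0) else 0))"
    by (rule sum.cong) (auto simp: algebra_simps P_def)
  also have "\<dots> = (if r = c then a*a' else 0) + (if P then a*b' else 0) + (if P then b*a' else 0)
      + (if P then of_nat d * (b*b') else 0)"
  proof -
    have sd: "(\<Sum>k<d*d. if D k then x else 0) = of_nat d * x" for x :: complex
      using sum_diag[of d x] by (simp add: D_def)
    show ?thesis
      using r c by (cases "r=c"; cases P) (simp_all add: sum.distrib sd algebra_simps)
  qed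
  also have "\<dots> = G d (a*a') (a*b' + b*a' + b*b'*of_nat d) $$ (r,c)"
    using r c by (simp add: G_def D_def P_def algebra_simps)
  finally show "(G d a b * G d a' b') $$ (r,c) = G d (a*a') (a*b' + b*a' + b*b'*of_nat d) $$ (r,c)" .
qed (auto simp: G_def)

lemma trace_G: "mat_trace (G d a b) = of_nat (d*d) * a + of_nat d * b"
proof -
  have "mat_trace (G d a b) = (\<Sum>k<d*d. a + (if k div d = k mod d then b else 0))"
    by (simp add: mat_trace_def G_def)
  also have "\<dots> = of_nat (d*d) * a + of_nat d * b" by (simp add: sum.distrib sum_diag)
  finally show ?thesis .
qed

lemma G_pow:
  assumes "d > 0"
  shows "G d x ((y - x) / of_nat d) ^\<^sub>m n = G d (x^n) ((y^n - x^n) / of_nat d)"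
proof (induction n)
  case 0
  show ?case by (rule eq_matI) (auto simp: G_def)
next
  case (Suc n)
  have "G d x ((y - x) / of_nat d) ^\<^sub>m Suc n = G d (x^n) ((y^n - x^n) / of_nat d) * G d x ((y - x) / of_nat d)"
    using Suc by simp
  also have "\<dots> = G d (x^Suc n) ((y^Suc n - x^Suc n) / of_nat d)"
  proof -
    have hd: "of_nat d \<noteq> (0::complex)" using assms by simp
    have "x^n * ((y - x) / of_nat d) + (y^n - x^n) / of_nat d * x + (y^n - x^n) / of_nat d * ((y - x) / of_nat d) * of_nat d
        = (x^n * (y - x) + (y^n - x^n) * x + (y^n - x^n) * (y - x)) / of_nat d"
      using hd by (simp add: add_divide_distrib)
    also have "x^n * (y - x) + (y^n - x^n) * x + (y^n - x^n) * (y - x) = y^Suc n - x^Suc n"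
      by (simp add: algebra_simps)
    finally show ?thesis unfolding G_entry using assms by (simp add: mult.commute)
  qed
  finally show ?case .
qed

lemma G_mulv:
  assumes v: "v \<in> carrier_vec (d*d)" and r: "r < d*d"
  shows "(G d a b *\<^sub>v v) $ r = a * v $ r + (if r div d = r mod d then b * (\<Sum>k<d*d. if k div d = k mod d then v $ k else 0) else 0)"
proof -
  have "(G d a b *\<^sub>v v) $ r = (\<Sum>k<d*d. ((if r = k then a else 0) + (if r div d = r mod d \<and> k div d = k mod d then b else 0)) * v $ k)"
    using v r by (simp add: G_def scalar_prod_def atLeast0LessThan)
  also have "\<dots> = (\<Sum>k<d*d. (if k = r then a * v $ k else 0) + (if r div d = r mod d then b * (if k div d = k mod d then v $ k else 0) else 0))"
    by (rule sum.cong) (auto simp: algebra_simps)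
  also have "\<dots> = a * v $ r + (if r div d = r mod d then b * (\<Sum>k<d*d. if k div d = k mod d then v $ k else 0) else 0)"
    using r by (simp add: sum.distrib sum_distrib_left)
  finally show ?thesis .
qed

lemma idx: assumes "u < d" "w < (d::nat)"
  shows "u*d+w < d*d" "(u*d+w) div d = u" "(u*d+w) mod d = w"
proof -
  have "u*d+w < Suc u * d" using assms by simp
  also have "Suc u * d \<le> d*d" using assms by (intro mult_le_mono1) simp
  finally show "u*d+w < d*d" .
  show "(u*d+w) div d = u" "(u*d+w) mod d = w" using assms by auto
qed

lemma pt_werner:
  assumes "d > 0"
  shows "partial_transpose_A d (werner d \<alpha>) = G d
     (complex_of_real ((\<alpha> / real (Suc d choose 2) + (1 - \<alpha>) / real (d choose 2)) / 2))
     (complex_of_real ((\<alpha> / real (Suc d choose 2) - (1 - \<alpha>) / real (d choose 2)) / 2))"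
    (is "_ = G d ?c ?e")
proof (rule eq_matI)
  fix r c assume "r < dim_row (G d ?c ?e)" "c < dim_col (G d ?c ?e)"
  hence r: "r < d*d" and c: "c < d*d" by (auto simp: G_def)
  have rd: "r div d < d" "c div d < d" using r c by (metis less_mult_imp_div_less)+
  have rm: "r mod d < d" "c mod d < d" using assms by auto
  define \<rho> where "\<rho> = (c div d) * d + r mod d"
  define \<sigma> where "\<sigma> = (r div d) * d + c mod d"
  have \<rho>: "\<rho> < d*d" "\<rho> div d = c div d" "\<rho> mod d = r mod d"
    unfolding \<rho>_def using idx[OF rd(2) rm(1)] by simp_all
  have \<sigma>: "\<sigma> < d*d" "\<sigma> div d = r div d" "\<sigma> mod d = c mod d"
    unfolding \<sigma>_def using idx[OF rd(1) rm(2)] by simp_all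
  have eq: "(\<rho> = \<sigma>) = (r = c)"
  proof
    assume "\<rho> = \<sigma>"
    hence h: "c div d = r div d" "r mod d = c mod d" using \<rho>(2,3) \<sigma>(2,3) by simp_all
    have "r = (r div d) * d + r mod d" "c = (c div d) * d + c mod d" by simp_all
    thus "r = c" using h by simp
  qed (simp add: \<rho>_def \<sigma>_def)
  have F: "(\<rho> div d = \<sigma> mod d \<and> \<rho> mod d = \<sigma> div d) = (r div d = r mod d \<and> c div d = c mod d)"
    using \<rho>(2,3) \<sigma>(2,3) by (simp add: eq_commute conj_commute)
  have "partial_transpose_A d (werner d \<alpha>) $$ (r,c) = werner d \<alpha> $$ (\<rho>, \<sigma>)"
    using r c by (simp add: partial_transpose_A_def \<rho>_def \<sigma>_def)
  also have "\<dots> = complex_of_real (\<alpha> / real (Suc d choose 2)) * (1/2 * ((if \<rho> = \<sigma> then 1 else 0)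
        + (if \<rho> div d = \<sigma> mod d \<and> \<rho> mod d = \<sigma> div d then 1 else 0)))
      + complex_of_real ((1 - \<alpha>) / real (d choose 2)) * (1/2 * ((if \<rho> = \<sigma> then 1 else 0)
        - (if \<rho> div d = \<sigma> mod d \<and> \<rho> mod d = \<sigma> div d then 1 else 0)))"
    using \<rho>(1) \<sigma>(1) by (simp add: werner_def Pi_plus_def Pi_minus_def swap_op_def)
  also have "\<dots> = complex_of_real (\<alpha> / real (Suc d choose 2)) * (1/2 * ((if r = c then 1 else 0)
        + (if r div d = r mod d \<and> c div d = c mod d then 1 else 0)))
      + complex_of_real ((1 - \<alpha>) / real (d choose 2)) * (1/2 * ((if r = c then 1 else 0)
        - (if r div d = r mod d \<and> c div d = c mod d then 1 else 0)))"
    unfolding eq F ..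
  also have "\<dots> = G d ?c ?e $$ (r,c)"
    using r c by (cases "r = c"; cases "r div d = r mod d"; cases "c div d = c mod d")
      (simp_all add: G_def of_real_add of_real_diff of_real_divide add_divide_distrib diff_divide_distrib)
  finally show "partial_transpose_A d (werner d \<alpha>) $$ (r,c) = G d ?c ?e $$ (r,c)" .
qed (auto simp: G_def partial_transpose_A_def)

lemma real_choose2: "real (n choose 2) = real n * (real n - 1) / 2"
  by (induction n) (simp_all add: numeral_2_eq_2 field_simps)

lemma moment_ineq:
  fixes \<mu> x y :: real
  assumes "\<mu> > 0" "x > 0" "\<mu> * x + y = 1"
  shows "\<mu>*x^3 + y^3 < (\<mu>*x^2 + y^2)^2 \<longleftrightarrow> y < 0"
proof -
  have id:  "(\<mu>*x^2 + y^2)^2 - (\<mu>*x^3 + y^3) * (\<mu> * x + y) = (\<mu>*x) * (-y) * (x-y)^2"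
    by (simp add: power2_eq_square power3_eq_cube algebra_simps)
  have key: "(\<mu>*x^2 + y^2)^2 - (\<mu>*x^3 + y^3) = (\<mu>*x) * (-y) * (x-y)^2"
    using id unfolding assms(3) by simp
  have mx: "\<mu>*x > 0" using assms by simp
  show ?thesis
  proof
    assume "\<mu>*x^3 + y^3 < (\<mu>*x^2 + y^2)^2"
    hence "(\<mu>*x) * (-y) * (x-y)^2 > 0" using key by simp
    hence "(\<mu>*x) * (-y) > 0" using zero_less_mult_pos2 by (metis zero_le_power2 mult_nonneg_nonneg
       linorder_not_less less_le mult_eq_0_iff)
    hence "-y > 0" using zero_less_mult_pos mx by blast
    thus "y < 0" by simp
  next
    assume "y < 0"
    hence "(x-y)^2 > 0" using assms by simp
    moreover have "(\<mu>*x) * (-y) > 0" using mx \<open>y<0\<close> by (intro mult_pos_pos[of "\<mu>*x"]) simp_all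
    ultimately have "(\<mu>*x) * (-y) * (x-y)^2 > 0" by (rule mult_pos_pos[rotated])
    thus "\<mu>*x^3 + y^3 < (\<mu>*x^2 + y^2)^2" using key by simp
  qed
qed

lemma eig_G:
  assumes d: "d > 0" and ev: "eigenvalue (G d X E) lam" and ne: "lam \<noteq> X"
  shows "lam = X + of_nat d * E"
proof -
  from ev obtain v where v: "v \<in> carrier_vec (d*d)" "v \<noteq> 0\<^sub>v (d*d)" "G d X E *\<^sub>v v = lam \<cdot>\<^sub>v v"
    unfolding eigenvalue_def eigenvector_def by (auto simp: G_def)
  define D where "D = (\<lambda>k::nat. k div d = k mod d)"
  define s where "s = (\<Sum>k<d*d. if D k then v $ k else 0)"
  have entry: "X * v $ r + (if D r then E * s else 0) = lam * v $ r" if r: "r < d*d" for r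
  proof -
    have "X * v $ r + (if D r then E * s else 0) = (G d X E *\<^sub>v v) $ r"
      using G_mulv[OF v(1) r, of X E] by (simp add: D_def s_def)
    also have "\<dots> = lam * v $ r" using v(3) r v(1) by (metis index_smult_vec(1) carrier_vecD)
    finally show ?thesis .
  qed
  have nl: "lam - X \<noteq> 0" using ne by simp
  have vr: "v $ r = (if D r then E * s / (lam - X) else 0)" if r: "r < d*d" for r
    using entry[OF r] nl by (cases "D r") (auto simp: field_simps)
  have s_ne: "s \<noteq> 0"
  proof
    assume "s = 0"
    hence "v = 0\<^sub>v (d*d)" using vr v(1) by (intro eq_vecI) auto
    thus False using v(2) by simp
  qed
  have "(\<Sum>k<d*d. if D k then v $ k else 0) = (\<Sum>k<d*d. if D k then E * s / (lam - X) else 0)"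
    by (rule sum.cong) (auto simp: vr)
  hence "s = (\<Sum>k<d*d. if D k then E * s / (lam - X) else 0)" unfolding s_def[symmetric] .
  also have "\<dots> = of_nat d * (E * s / (lam - X))" using sum_diag by (simp add: D_def)
  finally have "s * (lam - X) = of_nat d * E * s" using nl by (simp add: field_simps)
  hence "lam - X = of_nat d * E" using s_ne by (simp add: mult.commute)
  thus ?thesis by (simp add: algebra_simps)
qed

lemma eig_G2:
  assumes d: "d > 0"
  shows "eigenvalue (G d X E) (X + of_nat d * E)"
proof -
  define v where "v = vec (d*d) (\<lambda>k. if k div d = k mod d then (1::complex) else 0)"
  have vc: "v \<in> carrier_vec (d*d)" by (simp add: v_def)
  have "v $ 0 = 1" using d by (simp add: v_def)
  have vn: "v \<noteq> 0\<^sub>v (d*d)"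
  proof
    assume "v = 0\<^sub>v (d*d)"
    hence "v $ 0 = 0" using d by simp
    thus False using \<open>v $ 0 = 1\<close> by simp
  qed
  have sv: "(\<Sum>k<d*d. if k div d = k mod d then v $ k else 0) = of_nat d"
  proof -
    have "(\<Sum>k<d*d. if k div d = k mod d then v $ k else 0) = (\<Sum>k<d*d. if k div d = k mod d then 1 else 0)"
      by (rule sum.cong) (auto simp: v_def)
    thus ?thesis using sum_diag[of d 1] by simp
  qed
  have "G d X E *\<^sub>v v = (X + of_nat d * E) \<cdot>\<^sub>v v"
  proof (rule eq_vecI)
    fix i assume "i < dim_vec ((X + of_nat d * E) \<cdot>\<^sub>v v)"
    hence i: "i < d*d" using vc by simp
    have vi: "v $ i = (if i div d = i mod d then 1 else 0)" using i by (simp add: v_def)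
    have "(G d X E *\<^sub>v v) $ i = X * v $ i + (if i div d = i mod d then E * of_nat d else 0)"
      using G_mulv[OF vc i, of X E] by (simp only: sv)
    also have "\<dots> = (X + of_nat d * E) * v $ i"
      unfolding vi by (cases "i div d = i mod d") (simp_all add: distrib_right)
    also have "\<dots> = ((X + of_nat d * E) \<cdot>\<^sub>v v) $ i" using i vc by simp
    finally show "(G d X E *\<^sub>v v) $ i = ((X + of_nat d * E) \<cdot>\<^sub>v v) $ i" .
  next
    have "dim_vec v = d*d" using vc by simp
    thus "dim_vec (G d X E *\<^sub>v v) = dim_vec ((X + of_nat d * E) \<cdot>\<^sub>v v)" by (simp add: G_def)
  qed
  moreover have "dim_row (G d X E) = d*d" by (simp add: G_def)
  ultimately show ?thesis unfolding eigenvalue_def eigenvector_def using vc vn by metis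
qed

theorem mainTheorem4:
  fixes d :: nat and \<alpha> :: real
  assumes "d \<ge> 2" and "0 \<le> \<alpha>" and "\<alpha> \<le> 1"
  shows "(Re (werner_moment d \<alpha> 3) < (Re (werner_moment d \<alpha> 2))^2 \<longleftrightarrow> \<alpha> < 1/2)
       \<and> (\<alpha> < 1/2 \<longleftrightarrow>
            (\<exists>x::real. x < 0 \<and> eigenvalue (partial_transpose_A d (werner d \<alpha>)) (complex_of_real x)))"
proof -
  have d0: "d > 0" using assms by simp
  define r where "r = real d"
  have r2: "r \<ge> 2" using assms by (simp add: r_def)
  define A where "A = \<alpha> / real (Suc d choose 2)"
  define B where "B = (1 - \<alpha>) / real (d choose 2)"
  define x where "x = (A + B) / 2"
  define e where "e = (A - B) / 2"
  define y where "y = (2*\<alpha> - 1) / r"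
  have A: "A = 2*\<alpha> / (r*(r+1))" unfolding A_def r_def real_choose2 by (simp add: field_simps)
  have B: "B = 2*(1-\<alpha>) / (r*(r-1))" unfolding B_def r_def real_choose2 by (simp add: field_simps)
  have rp: "r*(r+1) \<noteq> 0" "r*(r-1) \<noteq> 0" "r \<noteq> 0" "r - 1 > 0" using r2 by auto
  have Ar: "A*(r*(r+1)) = 2*\<alpha>" unfolding A using rp by simp
  have Br: "B*(r*(r-1)) = 2*(1-\<alpha>)" unfolding B using rp by simp
  have rr4: "r*r \<ge> 2*2" using r2 by (intro mult_mono) auto
  hence den: "r*(r*r-1) \<noteq> 0" using rp r2 by simp
  have "x * (r*(r*r-1)) = (A*(r*(r+1))*(r-1) + B*(r*(r-1))*(r+1))/2"
    unfolding x_def by (simp add: algebra_simps)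
  also have "\<dots> = r + 1 - 2*\<alpha>" unfolding Ar Br by (simp add: field_simps)
  finally have x: "x = (r + 1 - 2*\<alpha>) / (r*(r*r-1))" using den by (simp add: eq_divide_eq)
  have "r * (x + r*e) = (A*(r*(r+1)) - B*(r*(r-1)))/2"
    unfolding x_def e_def by (simp add: field_simps)
  also have "\<dots> = 2*\<alpha> - 1" unfolding Ar Br by (simp add: field_simps)
  finally have h1: "x + r * e = y" unfolding y_def using rp by (simp add: eq_divide_eq mult.commute)
  have h2: "(r*r - 1) * x + y = 1"
  proof -
    have rr: "r*r - 1 \<noteq> 0" using den by simp
    have "(r*r - 1) * x = (r + 1 - 2*\<alpha>) / r" unfolding x using rr rp by simp
    hence "(r*r - 1) * x + y = (r + 1 - 2*\<alpha>) / r + (2*\<alpha> - 1) / r"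
      unfolding y_def by simp
    also have "\<dots> = 1" using rp by (simp add: add_divide_distrib[symmetric])
    finally show ?thesis .
  qed
  have h3: "x > 0"
  proof -
    have "r + 1 - 2*\<alpha> > 0" using r2 assms by simp
    moreover have "r*(r*r-1) > 0" using r2 rr4 by (intro mult_pos_pos) auto
    ultimately show ?thesis unfolding x by simp
  qed
  define X where "X = complex_of_real x"
  define Y where "Y = complex_of_real y"
  define E where "E = complex_of_real e"
  have EY: "E = (Y - X) / of_nat d"
    unfolding E_def Y_def X_def using h1[symmetric] rp
    by (simp add: r_def field_simps)
  have T: "partial_transpose_A d (werner d \<alpha>) = G d X E"
    unfolding pt_werner[OF d0] X_def E_def x_def e_def A_def B_def ..
  have mom: "werner_moment d \<alpha> n = complex_of_real ((r*r - 1) * x^n + y^n)" for n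
  proof -
    have "werner_moment d \<alpha> n = mat_trace (G d (X^n) ((Y^n - X^n) / of_nat d))"
      unfolding werner_moment_def T EY G_pow[OF d0] ..
    also have "\<dots> = of_nat (d*d) * X^n + (Y^n - X^n)"
      unfolding trace_G using d0 by simp
    also have "\<dots> = complex_of_real ((r*r - 1) * x^n + y^n)"
      unfolding X_def Y_def r_def by (simp add: algebra_simps)
    finally show ?thesis .
  qed
  have m3: "Re (werner_moment d \<alpha> 3) = (r*r-1)*x^3 + y^3" using mom by simp
  have m2: "Re (werner_moment d \<alpha> 2) = (r*r-1)*x^2 + y^2" using mom by simp
  have mu: "r*r - 1 > 0" using rr4 by simp
  have ya: "y < 0 \<longleftrightarrow> \<alpha> < 1/2" unfolding y_def using rp r2 by (auto simp: divide_less_0_iff)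
  have part1: "Re (werner_moment d \<alpha> 3) < (Re (werner_moment d \<alpha> 2))^2 \<longleftrightarrow> \<alpha> < 1/2"
    unfolding m3 m2 using moment_ineq[OF mu h3 h2] ya by simp
  have XY: "X + of_nat d * E = Y"
  proof -
    have "complex_of_real (x + real d * e) = complex_of_real y" using h1 by (simp add: r_def)
    thus ?thesis unfolding X_def E_def Y_def by simp
  qed
  have part2: "\<alpha> < 1/2 \<longleftrightarrow>
            (\<exists>t::real. t < 0 \<and> eigenvalue (partial_transpose_A d (werner d \<alpha>)) (complex_of_real t))"
  proof
    assume "\<alpha> < 1/2"
    hence "y < 0" using ya by simp
    moreover have "eigenvalue (partial_transpose_A d (werner d \<alpha>)) (complex_of_real y)"
      unfolding T using eig_G2[OF d0, of X E] XY Y_def by simp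
    ultimately show "\<exists>t::real. t < 0 \<and> eigenvalue (partial_transpose_A d (werner d \<alpha>)) (complex_of_real t)"
      by blast
  next
    assume "\<exists>t::real. t < 0 \<and> eigenvalue (partial_transpose_A d (werner d \<alpha>)) (complex_of_real t)"
    then obtain t where t: "t < 0" "eigenvalue (G d X E) (complex_of_real t)" unfolding T by blast
    have "complex_of_real t \<noteq> X" unfolding X_def using t(1) h3 by simp
    hence "complex_of_real t = Y" using eig_G[OF d0 t(2)] XY by simp
    hence "t = y" unfolding Y_def by simp
    thus "\<alpha> < 1/2" using t(1) ya by simp
  qed
  show ?thesis using part1 part2 by blast
qed

thm_deps mainTheorem4

end
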